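(* Assume the setting and regular conditions described in the context. Fix $0\le s<T$ such that $X_s$ has a positive probability density $p_s\in H^2_{\mathrm{loc}}(\mathbb{R}^d)$, assume $q(s,\cdot)\in C_c^1(\mathbb{R}^d)$ and $r(s,\cdot)\in C_c^2(\mathbb{R}^d)$, and let $v_s=\mathcal{L}^*_sp_s/p_s$, where $\mathcal{L}^*_su=-\sum_i\partial_i(q^i(s,\cdot)u)+\frac12\sum_{i,j}\partial_{ij}(r^{ij}(s,\cdot)u)$. Assume that there exists another function $\tilde v_s\in L^1(p_s)$ on $\mathbb{R}^d$ such that $$\mathbb{E}\,f(X_t)v_s(X_s)=\mathbb{E}\,f(X_t)\tilde v_s(X_s)\qquad\text{for all } f\in C_c^\infty(\mathbb{R}^d),\ s<t\le T.$$ Then $v_s=\tilde v_s$ almost everywhere.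
   Context: Setting: Fix $T>0$; $X$ solves $dX_t=b(t,X_t)dt+\sigma(t,X_t)dW_t$ in $\mathbb{R}^d$, $W$ an $n$-dimensional Brownian motion, $a=\sigma\sigma^T$, generator $\mathcal{A}_tf=\sum_ib^i\partial_if+\frac12\sum_{i,j}a^{ij}\partial_{ij}f$. Regular conditions: there are $\alpha\in(0,1)$, $\lambda,C>0$, $\eta:[0,T]\times\mathbb{R}^d\to\mathbb{R}$ with (a) for all $R>0$, $b,a$ are continuous on $[0,T]\times B_R$ ($B_R$ the open ball of radius $R$) with $\sup_{t\in[0,T]}\|b(t,\cdot)\|_{C^{3+\alpha}_b(B_R)}+\sup_t\|a(t,\cdot)\|_{C^{3+\alpha}_b(B_R)}<\infty$, where $\|u\|_{C^{3+\alpha}_b}$ is the sum of sup norms of derivatives of order $\le3$ plus $\alpha$-Hölder seminorms of third derivatives; (b) $\xi^Ta(t,x)\xi\ge\eta(t,x)|\xi|^2$, $\inf\eta\ge\lambda$; (c) $b(t,x)^Tx\le C\eta(1+|x|^2)$, $|a(t,x)x|+\mathrm{tr}\,a(t,x)\le C\eta(1+|x|^2)$; (d) $|D^\beta b|+|D^\beta a|\le C\eta$ for $1\le|\beta|\le3$; (e) some $\phi\in C^2(\mathbb{R}^d)$ with $\phi\to\infty$ at infinity satisfies $\mathcal{A}_t\phi\le C\phi$ on $[0,T]\times\mathbb{R}^d$. Perturbation data: $\bar b(t,h,x)$, $\bar a(t,h,x)$ on $[0,T]\times[-1,1]\times\mathbb{R}^d$, differentiable in $h$, with $\bar b(t,0,x)=b(t,x)$,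 $\bar a(t,0,x)=a(t,x)$; $q=\partial_h|_{h=0}\bar b$, $r=\partial_h|_{h=0}\bar a$. *)

theory Defs
  imports "HOL-Probability.Probability"
begin

definition partial_differentiable ::
  "'d::finite \<Rightarrow> (real^'d \<Rightarrow> 'b::real_normed_vector) \<Rightarrow> real^'d \<Rightarrow> bool" where
  "partial_differentiable i f x \<longleftrightarrow> (\<lambda>h. f (x + h *\<^sub>R axis i 1)) differentiable (at 0)"

definition pdiff ::
  "'d::finite \<Rightarrow> (real^'d \<Rightarrow> 'b::real_normed_vector) \<Rightarrow> real^'d \<Rightarrow> 'b" where
  "pdiff i f x = vector_derivative (\<lambda>h. f (x + h *\<^sub>R axis i 1)) (at 0)"

fun dpart :: "'d::finite list \<Rightarrow> (real^'d \<Rightarrow> 'b::real_normed_vector) \<Rightarrow> real^'d \<Rightarrow> 'b" where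
  "dpart [] f = f"
| "dpart (i # is) f = pdiff i (dpart is f)"

definition C_k_on :: "nat \<Rightarrow> (real^'d::finite) set \<Rightarrow> (real^'d \<Rightarrow> 'b::real_normed_vector) \<Rightarrow> bool" where
  "C_k_on k U f \<longleftrightarrow>
     (\<forall>is. length is < k \<longrightarrow> (\<forall>x\<in>U. \<forall>i. partial_differentiable i (dpart is f) x)) \<and>
     (\<forall>is. length is \<le> k \<longrightarrow> continuous_on U (dpart is f))"

definition C_inf :: "(real^'d::finite \<Rightarrow> 'b::real_normed_vector) \<Rightarrow> bool" where
  "C_inf f \<longleftrightarrow> (\<forall>k. C_k_on k UNIV f)"

definition compact_support :: "(real^'d::finite \<Rightarrow> 'b::real_normed_vector) \<Rightarrow> bool" where
  "compact_support f \<longleftrightarrow> bounded {x. f x \<noteq> 0}"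

definition test_fun :: "(real^'d::finite \<Rightarrow> real) \<Rightarrow> bool" where
  "test_fun f \<longleftrightarrow> C_inf f \<and> compact_support f"

definition C_c :: "nat \<Rightarrow> (real^'d::finite \<Rightarrow> 'b::real_normed_vector) \<Rightarrow> bool" where
  "C_c k f \<longleftrightarrow> C_k_on k UNIV f \<and> compact_support f"

definition unif_C3alpha_ball ::
  "real \<Rightarrow> real \<Rightarrow> real \<Rightarrow> (real \<Rightarrow> real^'d::finite \<Rightarrow> 'b::real_normed_vector) \<Rightarrow> bool" where
  "unif_C3alpha_ball \<alpha> T R g \<longleftrightarrow>
     (\<forall>t\<in>{0..T}. C_k_on 3 (ball 0 R) (g t)) \<and>
     (\<exists>K. \<forall>t\<in>{0..T}. \<forall>x\<in>ball 0 R. \<forall>is. length is \<le> 3 \<longrightarrow> norm (dpart is (g t) x) \<le> K) \<and>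
     (\<exists>H. \<forall>t\<in>{0..T}. \<forall>x\<in>ball 0 R. \<forall>y\<in>ball 0 R. \<forall>is. length is = 3 \<longrightarrow>
          norm (dpart is (g t) x - dpart is (g t) y) \<le> H * dist x y powr \<alpha>)"

definition generator ::
  "(real \<Rightarrow> real^'d \<Rightarrow> real^'d) \<Rightarrow> (real \<Rightarrow> real^'d \<Rightarrow> real^'d^'d) \<Rightarrow> real
     \<Rightarrow> (real^'d::finite \<Rightarrow> real) \<Rightarrow> real^'d \<Rightarrow> real" where
  "generator b a t f x =
     (\<Sum>i\<in>UNIV. b t x $ i * dpart [i] f x)
     + 1/2 * (\<Sum>i\<in>UNIV. \<Sum>j\<in>UNIV. a t x $ i $ j * dpart [i, j] f x)"

definition regular_conditions ::
  "real \<Rightarrow> (real \<Rightarrow> real^'d \<Rightarrow> real^'d) \<Rightarrow> (real \<Rightarrow> real^'d \<Rightarrow> real^'d^'d)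
     \<Rightarrow> real \<Rightarrow> real \<Rightarrow> real \<Rightarrow> (real \<Rightarrow> real^'d::finite \<Rightarrow> real) \<Rightarrow> bool" where
  "regular_conditions T b a \<alpha> lam C \<eta> \<longleftrightarrow>
     0 < \<alpha> \<and> \<alpha> < 1 \<and> 0 < lam \<and> 0 < C \<and>
     \<comment> \<open>(a)\<close>
     (\<forall>R>0. continuous_on ({0..T} \<times> ball 0 R) (\<lambda>(t, x). b t x) \<and>
            continuous_on ({0..T} \<times> ball 0 R) (\<lambda>(t, x). a t x) \<and>
            unif_C3alpha_ball \<alpha> T R b \<and> unif_C3alpha_ball \<alpha> T R a) \<and>
     \<comment> \<open>(b)\<close>
     (\<forall>t\<in>{0..T}. \<forall>x \<xi>. \<xi> \<bullet> (a t x *v \<xi>) \<ge> \<eta> t x * (norm \<xi>)\<^sup>2) \<and>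
     (\<forall>t\<in>{0..T}. \<forall>x. \<eta> t x \<ge> lam) \<and>
     \<comment> \<open>(c)\<close>
     (\<forall>t\<in>{0..T}. \<forall>x. b t x \<bullet> x \<le> C * \<eta> t x * (1 + (norm x)\<^sup>2)) \<and>
     (\<forall>t\<in>{0..T}. \<forall>x. norm (a t x *v x) + trace (a t x) \<le> C * \<eta> t x * (1 + (norm x)\<^sup>2)) \<and>
     \<comment> \<open>(d)\<close>
     (\<forall>t\<in>{0..T}. \<forall>x. \<forall>is. 1 \<le> length is \<and> length is \<le> 3 \<longrightarrow>
          norm (dpart is (b t) x) + norm (dpart is (a t) x) \<le> C * \<eta> t x) \<and>
     \<comment> \<open>(e)\<close>
     (\<exists>\<phi>::real^'d \<Rightarrow> real. C_k_on 2 UNIV \<phi> \<and> filterlim \<phi> at_top at_infinity \<and>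
          (\<forall>t\<in>{0..T}. \<forall>x. generator b a t \<phi> x \<le> C * \<phi> x))"

section \<open>Solution of the SDE, in the form of the (Stroock--Varadhan) martingale problem\<close>

definition solves_martingale_problem ::
  "'w measure \<Rightarrow> (real \<Rightarrow> 'w measure) \<Rightarrow> (real \<Rightarrow> 'w \<Rightarrow> real^'d::finite)
     \<Rightarrow> (real \<Rightarrow> real^'d \<Rightarrow> real^'d) \<Rightarrow> (real \<Rightarrow> real^'d \<Rightarrow> real^'d^'d) \<Rightarrow> real \<Rightarrow> bool" where
  "solves_martingale_problem M F X b a T \<longleftrightarrow>
     prob_space M \<and>
     (\<forall>t\<in>{0..T}. subalgebra M (F t)) \<and>
     (\<forall>s t. 0 \<le> s \<longrightarrow> s \<le> t \<longrightarrow> t \<le> T \<longrightarrow> sets (F s) \<subseteq> sets (F t)) \<and>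
     (\<forall>t\<in>{0..T}. X t \<in> borel_measurable (F t)) \<and>
     (\<forall>\<omega>\<in>space M. continuous_on {0..T} (\<lambda>t. X t \<omega>)) \<and>
     (\<forall>f. test_fun f \<longrightarrow> (\<forall>s t. 0 \<le> s \<longrightarrow> s \<le> t \<longrightarrow> t \<le> T \<longrightarrow>
        (let Z = (\<lambda>\<omega>. f (X t \<omega>) - f (X s \<omega>) - integral {s..t} (\<lambda>u. generator b a u f (X u \<omega>)))
         in integrable M Z \<and> (AE \<omega> in M. real_cond_exp M (F s) Z \<omega> = 0))))"

definition loc_integrable :: "(real^'d::finite \<Rightarrow> real) \<Rightarrow> bool" where
  "loc_integrable f \<longleftrightarrow> f \<in> borel_measurable lborel \<and>
     (\<forall>K. compact K \<longrightarrow> set_integrable lborel K f)"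

definition L2_loc :: "(real^'d::finite \<Rightarrow> real) \<Rightarrow> bool" where
  "L2_loc f \<longleftrightarrow> f \<in> borel_measurable lborel \<and>
     (\<forall>K. compact K \<longrightarrow> set_integrable lborel K (\<lambda>x. (f x)\<^sup>2))"

definition weak_deriv :: "'d list \<Rightarrow> (real^'d::finite \<Rightarrow> real) \<Rightarrow> (real^'d \<Rightarrow> real) \<Rightarrow> bool" where
  "weak_deriv is f g \<longleftrightarrow> loc_integrable f \<and> loc_integrable g \<and>
     (\<forall>\<phi>. test_fun \<phi> \<longrightarrow>
        (\<integral>x. f x * dpart is \<phi> x \<partial>lborel) = (-1) ^ length is * (\<integral>x. g x * \<phi> x \<partial>lborel))"

definition H2_loc :: "(real^'d::finite \<Rightarrow> real) \<Rightarrow> bool" where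
  "H2_loc f \<longleftrightarrow> L2_loc f \<and> (\<forall>is. length is \<le> 2 \<longrightarrow> (\<exists>g. L2_loc g \<and> weak_deriv is f g))"

end

theory Submission
  imports Defs "HOL-Computational_Algebra.Polynomial"
begin

definition psi :: "real \<Rightarrow> real" where
  "psi x = (if x > 0 then exp (- 1 / x) else 0)"

definition smooth1 :: "(real \<Rightarrow> real) \<Rightarrow> bool" where
  "smooth1 f \<longleftrightarrow> (\<forall>n x. (deriv ^^ n) f differentiable (at x))"

lemma smooth1_closure:
  assumes S: "\<And>f. f \<in> S \<Longrightarrow> (\<forall>x. f differentiable (at x)) \<and> deriv f \<in> S"
    and f: "f \<in> S"
  shows "smooth1 f"
proof -
  have "(deriv ^^ n) f \<in> S" for n
    by (induction n) (auto simp: f dest: S)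
  then show ?thesis unfolding smooth1_def using S by blast
qed

lemma smooth1_diff: "smooth1 f \<Longrightarrow> (f has_real_derivative deriv f x) (at x)"
  unfolding smooth1_def
  by (metis DERIV_deriv_iff_real_differentiable funpow_0)

lemma smooth1_deriv: "smooth1 f \<Longrightarrow> smooth1 (deriv f)"
  unfolding smooth1_def by (metis funpow_Suc_right comp_apply)

lemma smooth1_derivs: "smooth1 f \<Longrightarrow> smooth1 ((deriv ^^ n) f)"
  by (induction n) (auto simp: smooth1_deriv)

lemma smooth1_derivs_has: "smooth1 f \<Longrightarrow>
   ((deriv ^^ n) f has_real_derivative (deriv ^^ Suc n) f x) (at x)"
  using smooth1_diff[OF smooth1_derivs[of f n]] by simp

lemma smooth1_cont: "smooth1 f \<Longrightarrow> continuous_on UNIV f"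
  by (meson DERIV_isCont continuous_at_imp_continuous_on smooth1_diff)

lemma poly_exp_at_top: "((\<lambda>y. poly P y * exp (- y)) \<longlongrightarrow> (0::real)) at_top"
proof -
  have "((\<lambda>y. \<Sum>i\<le>degree P. coeff P i * (y ^ i / exp y)) \<longlongrightarrow> (\<Sum>i\<le>degree P. coeff P i * 0)) at_top"
    by (intro tendsto_intros tendsto_power_div_exp_0)
  moreover have "(\<lambda>y. \<Sum>i\<le>degree P. coeff P i * (y ^ i / exp y)) = (\<lambda>y. poly P y * exp (- y))"
    by (auto simp: poly_altdef sum_distrib_right exp_minus field_simps sum_divide_distrib)
  ultimately show ?thesis by simp
qed

lemma poly_exp_at_right: "((\<lambda>x. poly P (1 / x) * exp (- 1 / x)) \<longlongrightarrow> (0::real)) (at_right 0)"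
  unfolding filterlim_at_right_to_top
  using poly_exp_at_top[of P] by (simp add: divide_inverse)

definition psiP :: "real poly \<Rightarrow> real \<Rightarrow> real" where
  "psiP P x = (if x > 0 then poly P (1 / x) * exp (- 1 / x) else 0)"

definition psiQ :: "real poly \<Rightarrow> real poly" where
  "psiQ P = [:0, 0, 1:] * (P - pderiv P)"

lemma psiP_deriv: "(psiP P has_real_derivative psiP (psiQ P) x) (at x)"
proof (cases "x > 0")
  case True
  have i: "((\<lambda>x. 1 / x) has_real_derivative (- 1 / x^2)) (at x)"
    using DERIV_inverse[of x] True by (simp add: inverse_eq_divide power2_eq_square)
  have a: "((\<lambda>x. poly P (1 / x)) has_real_derivative poly (pderiv P) (1 / x) * (- 1 / x^2)) (at x)"
    by (rule DERIV_chain2[OF poly_DERIV i])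
  have i2: "((\<lambda>x. - 1 / x) has_real_derivative (1 / x^2)) (at x)"
    using DERIV_minus[OF i] by simp
  have b: "((\<lambda>x. exp (- 1 / x)) has_real_derivative exp (- 1 / x) * (1 / x^2)) (at x)"
    by (rule DERIV_chain2[OF DERIV_exp i2])
  have "((\<lambda>x. poly P (1 / x) * exp (- 1 / x)) has_real_derivative
      (poly (pderiv P) (1 / x) * (- 1 / x^2)) * exp (- 1 / x) + exp (- 1 / x) * (1 / x^2) * poly P (1 / x)) (at x)"
    by (rule DERIV_mult[OF a b])
  moreover have "(poly (pderiv P) (1 / x) * (- 1 / x^2)) * exp (- 1 / x) + exp (- 1 / x) * (1 / x^2) * poly P (1 / x)
      = psiP (psiQ P) x"
  proof -
    have q: "poly (psiQ P) y = y^2 * (poly P y - poly (pderiv P) y)" for y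
      by (simp add: psiQ_def power2_eq_square)
    have "psiP (psiQ P) x = (1/x)^2 * (poly P (1/x) - poly (pderiv P) (1/x)) * exp (- 1 / x)"
      using True by (simp add: psiP_def q)
    also have "\<dots> = (poly (pderiv P) (1 / x) * (- (1 / x^2))) * exp (- 1 / x) + exp (- 1 / x) * (1 / x^2) * poly P (1 / x)"
    proof -
      have *: "\<And>a pP pQ E::real. a*(pP-pQ)*E = pQ*(-a)*E + E*a*pP" by (simp add: algebra_simps)
      show ?thesis unfolding power_one_over by (rule *)
    qed
    also have "\<dots> = (poly (pderiv P) (1 / x) * (- 1 / x^2)) * exp (- 1 / x) + exp (- 1 / x) * (1 / x^2) * poly P (1 / x)"
      by (simp only: minus_divide_left)
    finally show ?thesis by simp
  qed
  ultimately have "((\<lambda>x. poly P (1 / x) * exp (- 1 / x)) has_real_derivative psiP (psiQ P) x) (at x)"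
    by simp
  then show ?thesis
    by (rule has_field_derivative_transform_within_open[where S="{0<..}"]) (use True in \<open>auto simp: psiP_def\<close>)
next
  case False
  show ?thesis
  proof (cases "x < 0")
    case True
    have "((\<lambda>_. 0) has_real_derivative 0) (at x)" by simp
    then have "(psiP P has_real_derivative 0) (at x)"
      by (rule has_field_derivative_transform_within_open[where S="{..<0}"]) (use True in \<open>auto simp: psiP_def\<close>)
    then show ?thesis using True by (simp add: psiP_def)
  next
    case False
    with \<open>\<not> x > 0\<close> have x: "x = 0" by simp
    have "((\<lambda>y. (psiP P y - psiP P 0) / (y - 0)) \<longlongrightarrow> 0) (at 0)"
    proof (rule filterlim_split_at)
      show "((\<lambda>y. (psiP P y - psiP P 0) / (y - 0)) \<longlongrightarrow> 0) (at_left 0)"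
        by (rule tendsto_eventually) (auto simp: psiP_def eventually_at_left_field intro!: exI[of _ "-1"])
      have "((\<lambda>x. poly ([:0,1:] * P) (1 / x) * exp (- 1 / x)) \<longlongrightarrow> (0::real)) (at_right 0)"
        by (rule poly_exp_at_right)
      then show "((\<lambda>y. (psiP P y - psiP P 0) / (y - 0)) \<longlongrightarrow> 0) (at_right 0)"
        apply (rule Lim_transform_eventually)
        apply (auto simp: psiP_def eventually_at_right_field intro!: exI[of _ 1])
        done
    qed
    then have "(psiP P has_real_derivative 0) (at 0)"
      by (simp add: has_field_derivative_iff)
    then show ?thesis using x by (simp add: psiP_def)
  qed
qed

lemma psiP_smooth: "smooth1 (psiP P)"
proof (rule smooth1_closure[where S="range psiP"])
  fix f assume "f \<in> range psiP"
  then obtain P where f: "f = psiP P" by auto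
  have "deriv f = psiP (psiQ P)"
    using psiP_deriv f by (auto intro!: DERIV_imp_deriv)
  then show "(\<forall>x. f differentiable (at x)) \<and> deriv f \<in> range psiP"
    using psiP_deriv f real_differentiable_def by blast
qed auto

lemma psi_eq: "psi = psiP 1"
  by (auto simp: psi_def psiP_def fun_eq_iff)

lemma psi_smooth: "smooth1 psi"
  by (simp add: psi_eq psiP_smooth)

lemma smooth1_affine:
  assumes "smooth1 f" shows "smooth1 (\<lambda>x. f (c * x + e))"
proof -
  let ?S = "{\<lambda>x. k * g (c * x + e) | k g. smooth1 g}"
  have "(\<lambda>x. 1 * f (c * x + e)) \<in> ?S" using assms by blast
  moreover have "(\<forall>x. h differentiable (at x)) \<and> deriv h \<in> ?S" if "h \<in> ?S" for h
  proof -
    obtain k g where h: "h = (\<lambda>x. k * g (c * x + e))" and g: "smooth1 g" using \<open>h \<in> ?S\<close> by blast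
    have d: "(h has_real_derivative (k * c) * deriv g (c * x + e)) (at x)" for x
    proof -
      have l: "((\<lambda>x. c * x + e) has_real_derivative c) (at x)"
        using DERIV_add[OF DERIV_cmult[OF DERIV_ident, of c] DERIV_const[of e]] by simp
      show ?thesis unfolding h
        using DERIV_cmult[OF DERIV_chain2[OF smooth1_diff[OF g] l], of k] by (simp add: ac_simps)
    qed
    then have "deriv h = (\<lambda>x. (k * c) * deriv g (c * x + e))"
      by (auto intro!: DERIV_imp_deriv)
    moreover have "(\<lambda>x. (k * c) * deriv g (c * x + e)) \<in> ?S"
      using smooth1_deriv[OF g] by blast
    moreover have "\<forall>x. h differentiable (at x)"
      using d real_differentiable_def by blast
    ultimately show ?thesis by simp
  qed
  ultimately have "smooth1 (\<lambda>x. 1 * f (c * x + e))" by (rule smooth1_closure[rotated])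
  then show ?thesis by simp
qed

definition slist :: "((real \<Rightarrow> real) \<times> (real \<Rightarrow> real)) list \<Rightarrow> real \<Rightarrow> real" where
  "slist L x = (\<Sum>(u, w) \<leftarrow> L. u x * w x)"

definition dlist :: "((real \<Rightarrow> real) \<times> (real \<Rightarrow> real)) list \<Rightarrow> ((real \<Rightarrow> real) \<times> (real \<Rightarrow> real)) list" where
  "dlist L = concat (map (\<lambda>(u, w). [(deriv u, w), (u, deriv w)]) L)"

lemma slist_deriv:
  assumes "\<forall>(u, w) \<in> set L. smooth1 u \<and> smooth1 w"
  shows "(slist L has_real_derivative slist (dlist L) x) (at x)"
  using assms
proof (induction L)
  case Nil
  then show ?case by (simp add: slist_def dlist_def)
next
  case (Cons p L)
  obtain u w where p: "p = (u, w)" by force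
  have u: "smooth1 u" and w: "smooth1 w" using Cons.prems p by auto
  have "((\<lambda>x. u x * w x + slist L x) has_real_derivative
      (deriv u x * w x + u x * deriv w x) + slist (dlist L) x) (at x)"
    using DERIV_add[OF DERIV_mult[OF smooth1_diff[OF u] smooth1_diff[OF w]] Cons.IH] Cons.prems
    by (simp add: algebra_simps)
  moreover have "slist (p # L) = (\<lambda>x. u x * w x + slist L x)"
    by (auto simp: slist_def p fun_eq_iff)
  moreover have "slist (dlist (p # L)) x = (deriv u x * w x + u x * deriv w x) + slist (dlist L) x"
    by (simp add: slist_def dlist_def p)
  ultimately show ?case by simp
qed

lemma smooth1_mult:
  assumes "smooth1 f" "smooth1 g" shows "smooth1 (\<lambda>x. f x * g x)"
proof -
  let ?S = "{slist L | L. \<forall>(u, w) \<in> set L. smooth1 u \<and> smooth1 w}"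
  have "slist [(f, g)] \<in> ?S" using assms by fastforce
  moreover have "slist [(f, g)] = (\<lambda>x. f x * g x)" by (simp add: slist_def fun_eq_iff)
  moreover have "(\<forall>x. h differentiable (at x)) \<and> deriv h \<in> ?S" if "h \<in> ?S" for h
  proof -
    obtain L where h: "h = slist L" and L: "\<forall>(u, w) \<in> set L. smooth1 u \<and> smooth1 w" using \<open>h \<in> ?S\<close> by blast
    have "deriv h = slist (dlist L)" using slist_deriv[OF L] h by (auto intro!: DERIV_imp_deriv)
    moreover have "\<forall>(u, w) \<in> set (dlist L). smooth1 u \<and> smooth1 w"
      using L by (auto simp: dlist_def smooth1_deriv)
    moreover have "slist (dlist L) \<in> ?S" using calculation(2) by blast
    moreover have "\<forall>x. h differentiable (at x)"
      using slist_deriv[OF L] h real_differentiable_def by blast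
    ultimately show ?thesis by simp
  qed
  ultimately show ?thesis using smooth1_closure[of ?S "slist [(f, g)]"] by simp
qed

lemma deriv_zero_open:
  fixes f :: "real \<Rightarrow> real"
  assumes "\<And>x. f differentiable (at x)" "open V" "\<And>y. y \<in> V \<Longrightarrow> f y = 0" "y \<in> V"
  shows "deriv f y = 0"
proof -
  have "((\<lambda>_. 0) has_real_derivative 0) (at y)" by simp
  then have "(f has_real_derivative 0) (at y)"
    by (rule has_field_derivative_transform_within_open[where S=V]) (use assms in auto)
  then show ?thesis by (rule DERIV_imp_deriv)
qed

lemma smooth1_derivs_zero:
  assumes "smooth1 f" "open V" "\<And>y. y \<in> V \<Longrightarrow> f y = 0" "y \<in> V"
  shows "(deriv ^^ n) f y = 0"
  using assms(4)
proof (induction n arbitrary: y)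
  case 0 then show ?case using assms by simp
next
  case (Suc n)
  have "deriv ((deriv ^^ n) f) y = 0"
    by (rule deriv_zero_open[where V=V]) (use Suc assms smooth1_derivs[OF assms(1), of n] in \<open>auto simp: smooth1_def\<close>)
  then show ?case by simp
qed


definition prodfun :: "('d::finite \<Rightarrow> real \<Rightarrow> real) \<Rightarrow> real^'d \<Rightarrow> real" where
  "prodfun G x = (\<Prod>k\<in>UNIV. G k (x $ k))"

lemma prodfun_split: "prodfun G (x + h *\<^sub>R axis i 1) = G i (x $ i + h) * (\<Prod>k\<in>UNIV-{i}. G k (x $ k))"
proof -
  have "prodfun G (x + h *\<^sub>R axis i 1) = G i ((x + h *\<^sub>R axis i 1) $ i) * (\<Prod>k\<in>UNIV-{i}. G k ((x + h *\<^sub>R axis i 1) $ k))"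
    unfolding prodfun_def by (rule prod.remove) auto
  also have "(\<Prod>k\<in>UNIV-{i}. G k ((x + h *\<^sub>R axis i 1) $ k)) = (\<Prod>k\<in>UNIV-{i}. G k (x $ k))"
    by (rule prod.cong) (auto simp: axis_def)
  finally show ?thesis by simp
qed

lemma prodfun_pdiff:
  assumes "\<And>k y. (G k has_real_derivative G' k y) (at y)"
  shows "((\<lambda>h. prodfun G (x + h *\<^sub>R axis i 1)) has_vector_derivative
           prodfun (\<lambda>k. if k = i then G' k else G k) x) (at 0)"
proof -
  have l: "((\<lambda>h. x $ i + h) has_real_derivative 1) (at 0)"
    using DERIV_add[OF DERIV_const[of "x $ i"] DERIV_ident] by simp
  have "((\<lambda>h. G i (x $ i + h) * (\<Prod>k\<in>UNIV-{i}. G k (x $ k))) has_real_derivative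
      G' i (x $ i + 0) * 1 * (\<Prod>k\<in>UNIV-{i}. G k (x $ k))) (at 0)"
    by (rule DERIV_cmult_right[OF DERIV_chain2[OF assms l]])
  moreover have "G' i (x $ i + 0) * 1 * (\<Prod>k\<in>UNIV-{i}. G k (x $ k)) = prodfun (\<lambda>k. if k = i then G' k else G k) x"
  proof -
    have "prodfun (\<lambda>k. if k = i then G' k else G k) x
        = G' i (x $ i) * (\<Prod>k\<in>UNIV-{i}. (if k = i then G' k else G k) (x $ k))"
      unfolding prodfun_def by (subst prod.remove[of UNIV i]) auto
    also have "(\<Prod>k\<in>UNIV-{i}. (if k = i then G' k else G k) (x $ k)) = (\<Prod>k\<in>UNIV-{i}. G k (x $ k))"
      by (rule prod.cong) auto
    finally show ?thesis by simp
  qed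
  ultimately show ?thesis
    unfolding prodfun_split has_real_derivative_iff_has_vector_derivative by simp
qed

lemma dpart_prodfun:
  assumes "\<And>k. smooth1 (G k)"
  shows "dpart is (prodfun G) = prodfun (\<lambda>k. (deriv ^^ (count_list is k)) (G k))"
proof (induction "is")
  case Nil
  then show ?case by simp
next
  case (Cons i "is")
  define H where "H = (\<lambda>k. (deriv ^^ (count_list is k)) (G k))"
  have d: "\<And>k y. (H k has_real_derivative deriv (H k) y) (at y)"
    unfolding H_def by (rule smooth1_diff[OF smooth1_derivs[OF assms]])
  have "dpart (i # is) (prodfun G) = pdiff i (prodfun H)"
    using Cons by (simp add: H_def)
  also have "\<dots> = prodfun (\<lambda>k. if k = i then deriv (H k) else H k)"
    unfolding pdiff_def by (rule ext, rule vector_derivative_at, rule prodfun_pdiff[OF d])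
  also have "(\<lambda>k. if k = i then deriv (H k) else H k) = (\<lambda>k. (deriv ^^ (count_list (i # is) k)) (G k))"
    by (rule ext) (auto simp: H_def)
  finally show ?case .
qed

lemma prodfun_cont:
  assumes "\<And>k. continuous_on UNIV (H k)"
  shows "continuous_on UNIV (prodfun H)"
proof -
  have "continuous_on UNIV (\<lambda>x::real^'a. H k (x $ k))" for k
    by (rule continuous_on_compose2[OF assms]) (auto intro!: continuous_intros)
  then show ?thesis unfolding prodfun_def by (intro continuous_intros) auto
qed

lemma prodfun_zero:
  assumes "\<And>k y. y \<notin> {a $ k .. b $ k} \<Longrightarrow> G k y = 0" "x \<notin> cbox a b"
  shows "prodfun G x = 0"
proof -
  obtain k where "x $ k \<notin> {a $ k .. b $ k}" using assms(2) by (auto simp: mem_box_cart)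
  then show ?thesis unfolding prodfun_def using assms(1) by (intro prod_zero) auto
qed

lemma test_fun_prodfun:
  assumes sm: "\<And>k. smooth1 (G k)" and supp: "\<And>k y. y \<notin> {a $ k .. b $ k} \<Longrightarrow> G k y = 0"
  shows "test_fun (prodfun G)"
proof -
  have "C_k_on n UNIV (prodfun G)" for n
    unfolding C_k_on_def
  proof (intro conjI allI impI ballI)
    fix "is" :: "'a list" and x i
    show "partial_differentiable i (dpart is (prodfun G)) x"
      unfolding partial_differentiable_def dpart_prodfun[OF sm]
      by (rule differentiableI_vector, rule prodfun_pdiff, rule smooth1_derivs_has[OF sm])
  next
    fix "is" :: "'a list"
    show "continuous_on UNIV (dpart is (prodfun G))"
      unfolding dpart_prodfun[OF sm]
      by (rule prodfun_cont, rule smooth1_cont, rule smooth1_derivs[OF sm])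
  qed
  moreover have "bounded {x. prodfun G x \<noteq> 0}"
    by (rule bounded_subset[OF bounded_cbox[of a b]]) (use prodfun_zero[OF supp] in fastforce)
  ultimately show ?thesis by (simp add: test_fun_def C_inf_def compact_support_def)
qed

lemma dpart_prodfun_zero:
  assumes sm: "\<And>k. smooth1 (G k)" and supp: "\<And>k y. y \<notin> {a $ k .. b $ k} \<Longrightarrow> G k y = 0"
    and x: "x \<notin> cbox a b"
  shows "dpart is (prodfun G) x = 0"
  unfolding dpart_prodfun[OF sm]
proof (rule prodfun_zero[OF _ x])
  fix k y assume y: "y \<notin> {a $ k .. b $ k}"
  show "(deriv ^^ count_list is k) (G k) y = 0"
    by (rule smooth1_derivs_zero[OF sm, where V="{..<a $ k} \<union> {b $ k<..}"]) (use y supp in auto)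
qed

definition bfac :: "nat \<Rightarrow> real \<Rightarrow> real \<Rightarrow> real \<Rightarrow> real" where
  "bfac n a b y = psi (real (Suc n) * (y - a)) * psi (real (Suc n) * (b - y))"

definition bump :: "nat \<Rightarrow> real^'d::finite \<Rightarrow> real^'d \<Rightarrow> real^'d \<Rightarrow> real" where
  "bump n a b = prodfun (\<lambda>k. bfac n (a $ k) (b $ k))"

lemma bfac_smooth: "smooth1 (bfac n a b)"
proof -
  have 1: "(\<lambda>y. psi (real (Suc n) * (y - a))) = (\<lambda>y. psi (real (Suc n) * y + (- real (Suc n) * a)))"
    by (simp add: algebra_simps)
  have 2: "(\<lambda>y. psi (real (Suc n) * (b - y))) = (\<lambda>y. psi ((- real (Suc n)) * y + (real (Suc n) * b)))"
    by (simp add: algebra_simps)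
  show ?thesis unfolding bfac_def
    by (rule smooth1_mult; unfold 1 2; rule smooth1_affine[OF psi_smooth])
qed

lemma psi_nonpos: "x \<le> 0 \<Longrightarrow> psi x = 0"
  by (simp add: psi_def)

lemma psi_bounds: "0 \<le> psi x" "psi x \<le> 1"
  by (auto simp: psi_def)

lemma bfac_supp: "y \<notin> {a .. b} \<Longrightarrow> bfac n a b y = 0"
  by (auto simp: bfac_def psi_nonpos mult_nonneg_nonpos)

lemma bfac_supp': "y \<notin> {a <..< b} \<Longrightarrow> bfac n a b y = 0"
  by (auto simp: bfac_def psi_nonpos mult_nonneg_nonpos)

lemma bfac_bounds: "0 \<le> bfac n a b y" "bfac n a b y \<le> 1"
  unfolding bfac_def using psi_bounds
  by (auto intro: mult_nonneg_nonneg mult_le_one)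

lemma psi_lim: assumes "c > 0" shows "(\<lambda>n. psi (real (Suc n) * c)) \<longlonglongrightarrow> 1"
proof -
  have "(\<lambda>n. exp (- (1 / c) * inverse (real (Suc n)))) \<longlonglongrightarrow> exp (- (1 / c) * 0)"
    by (intro tendsto_intros LIMSEQ_inverse_real_of_nat)
  moreover have "psi (real (Suc n) * c) = exp (- (1 / c) * inverse (real (Suc n)))" for n
    using assms by (simp add: psi_def field_simps add_pos_nonneg)
  ultimately show ?thesis by simp
qed

lemma bfac_lim: "y \<in> {a <..< b} \<Longrightarrow> (\<lambda>n. bfac n a b y) \<longlonglongrightarrow> 1"
  unfolding bfac_def using tendsto_mult[OF psi_lim[of "y - a"] psi_lim[of "b - y"]] by simp

lemma bump_test: "test_fun (bump n a b)"
  unfolding bump_def by (rule test_fun_prodfun[OF bfac_smooth bfac_supp])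

lemma bump_dpart_zero: "x \<notin> cbox a b \<Longrightarrow> dpart is (bump n a b) x = 0"
  unfolding bump_def by (rule dpart_prodfun_zero[OF bfac_smooth bfac_supp])

lemma bump_cont: "continuous_on UNIV (bump n a b)"
  using dpart_prodfun[of _ "[]"] unfolding bump_def
  by (intro prodfun_cont smooth1_cont bfac_smooth)

lemma bump_bounds: "0 \<le> bump n a b x" "bump n a b x \<le> 1"
  unfolding bump_def prodfun_def using bfac_bounds
  by (auto intro: prod_nonneg prod_le_1)

lemma bump_out: "x \<notin> box a b \<Longrightarrow> bump n a b x = 0"
proof -
  assume "x \<notin> box a b"
  then obtain k where "x $ k \<notin> {a $ k <..< b $ k}" by (auto simp: mem_box_cart)
  then show ?thesis unfolding bump_def prodfun_def
    by (intro prod_zero) (auto intro!: bexI[of _ k] bfac_supp')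
qed

lemma bump_lim: "x \<in> box a b \<Longrightarrow> (\<lambda>n. bump n a b x) \<longlonglongrightarrow> 1"
proof -
  assume "x \<in> box a b"
  then have "\<And>k. x $ k \<in> {a $ k <..< b $ k}" by (auto simp: mem_box_cart)
  then have "(\<lambda>n. \<Prod>k\<in>UNIV. bfac n (a $ k) (b $ k) (x $ k)) \<longlonglongrightarrow> (\<Prod>k\<in>(UNIV::'a set). 1)"
    by (intro tendsto_prod bfac_lim)
  then show ?thesis by (simp add: bump_def prodfun_def)
qed


lemma bump_meas[measurable]: "bump n a b \<in> borel_measurable lborel"
  by (simp add: borel_measurable_continuous_onI bump_cont)

lemma Z1:
  fixes g :: "real^'d::finite \<Rightarrow> real"
  assumes g_meas[measurable]: "g \<in> borel_measurable lborel"
    and loc: "set_integrable lborel (cbox a b) g"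
    and zero: "\<And>n. (\<integral>x. g x * bump n a b x \<partial>lborel) = 0"
  shows "(LINT x : box a b | lborel. g x) = 0"
proof -
  have lim: "(\<lambda>n. \<integral>x. g x * bump n a b x \<partial>lborel) \<longlonglongrightarrow> (\<integral>x. indicator (box a b) x *\<^sub>R g x \<partial>lborel)"
  proof (rule integral_dominated_convergence[where w="\<lambda>x. indicator (cbox a b) x * norm (g x)"])
    show "(\<lambda>x. indicator (box a b) x *\<^sub>R g x) \<in> borel_measurable lborel" by measurable
    show "(\<lambda>x. g x * bump n a b x) \<in> borel_measurable lborel" for n by measurable
    have eq: "(\<lambda>x. norm (indicator (cbox a b) x *\<^sub>R g x)) = (\<lambda>x. indicator (cbox a b) x * norm (g x))"
      by (rule ext) (simp add: indicator_def)
    have "integrable lborel (\<lambda>x. norm (indicator (cbox a b) x *\<^sub>R g x))"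
      using loc unfolding set_integrable_def by (rule integrable_norm)
    then show "integrable lborel (\<lambda>x. indicator (cbox a b) x * norm (g x))"
      by (simp only: eq)
  next
    show "AE x in lborel. (\<lambda>n. g x * bump n a b x) \<longlonglongrightarrow> indicator (box a b) x *\<^sub>R g x"
    proof (rule AE_I2)
      fix x
      show "(\<lambda>n. g x * bump n a b x) \<longlonglongrightarrow> indicator (box a b) x *\<^sub>R g x"
      proof (cases "x \<in> box a b")
        case True
        then show ?thesis using tendsto_mult[OF tendsto_const[of "g x"] bump_lim[OF True]] by simp
      next
        case False
        then show ?thesis by (simp add: bump_out)
      qed
    qed
  next
    fix n
    show "AE x in lborel. norm (g x * bump n a b x) \<le> indicator (cbox a b) x * norm (g x)"
    proof (rule AE_I2)
      fix x
      show "norm (g x * bump n a b x) \<le> indicator (cbox a b) x * norm (g x)"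
      proof (cases "x \<in> box a b")
        case True
        then have "x \<in> cbox a b" using box_subset_cbox by blast
        then show ?thesis using bump_bounds[of n a b x]
          by (simp add: abs_mult mult_left_le)
      next
        case False
        then show ?thesis by (simp add: bump_out)
      qed
    qed
  qed
  then have "(\<integral>x. indicator (box a b) x *\<^sub>R g x \<partial>lborel) = 0"
  proof -
    have "(\<lambda>n. \<integral>x. g x * bump n a b x \<partial>lborel) \<longlonglongrightarrow> 0" by (simp only: zero tendsto_const)
    then show ?thesis using LIMSEQ_unique[OF lim] by blast
  qed
  then show ?thesis by (simp add: set_lebesgue_integral_def)
qed

lemma Z:
  fixes g :: "real^'d::finite \<Rightarrow> real"
  assumes U: "open U" and g_meas[measurable]: "g \<in> borel_measurable lborel"
    and loc: "\<And>K. compact K \<Longrightarrow> K \<subseteq> U \<Longrightarrow> set_integrable lborel K g"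
    and zero: "\<And>n a b. cbox a b \<subseteq> U \<Longrightarrow> (\<integral>x. g x * bump n a b x \<partial>lborel) = 0"
  shows "AE x in lborel. x \<in> U \<longrightarrow> g x = 0"
proof -
  have Z1': "(LINT x : box a b | lborel. g x) = 0" if "cbox a b \<subseteq> U" for a b
    using Z1[OF g_meas loc[OF compact_cbox that] zero[OF that]] .
  have cb: "AE x in lebesgue. x \<in> cbox c d \<longrightarrow> g x = 0" if cd: "cbox c d \<subseteq> U" for c d
  proof -
    define hh where "hh = (\<lambda>x. if x \<in> box c d then g x else 0)"
    have sib: "set_integrable lborel S g" if "S \<in> sets lborel" "S \<subseteq> cbox c d" for S
      by (rule set_integrable_subset[OF loc[OF compact_cbox cd]]) (use that in auto)
    have "g integrable_on box c d"
      using set_borel_integral_eq_integral(1)[OF sib[of "box c d"]] box_subset_cbox by auto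
    then have hhU: "hh integrable_on UNIV" unfolding hh_def by (simp add: integrable_restrict_UNIV)
    have hh_int: "hh integrable_on cbox u v" for u v by (rule integrable_on_subcbox[OF hhU]) auto
    have hh_zero: "integral (cbox u v) hh = 0" for u v
    proof -
      have "integral (cbox u v) hh = integral (box u v) hh" by (simp add: integral_open_interval)
      also have "\<dots> = integral UNIV (\<lambda>x. if x \<in> box u v then hh x else 0)"
        by (simp add: integral_restrict_UNIV)
      also have "(\<lambda>x. if x \<in> box u v then hh x else 0) = (\<lambda>x. if x \<in> box u v \<inter> box c d then g x else 0)"
        by (auto simp: hh_def fun_eq_iff)
      also have "integral UNIV \<dots> = integral (box u v \<inter> box c d) g" by (rule integral_restrict_UNIV)
      also have "\<dots> = (LINT x : box u v \<inter> box c d | lborel. g x)"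
        by (rule set_borel_integral_eq_integral(2)[symmetric], rule sib) (use box_subset_cbox in auto)
      also have "\<dots> = 0"
      proof -
        obtain a' b' where ab: "box u v \<inter> box c d = box a' b'" using box_Int_box by blast
        show ?thesis
        proof (cases "box a' b' = {}")
          case True then show ?thesis by (simp add: ab set_lebesgue_integral_def)
        next
          case False
          have "cbox a' b' = closure (box a' b')" using closure_box[OF False] by simp
          also have "\<dots> \<subseteq> cbox c d"
            using ab box_subset_cbox[of c d] by (intro closure_minimal) auto
          finally show ?thesis using Z1'[of a' b'] cd ab by auto
        qed
      qed
      finally show ?thesis .
    qed
    obtain N where N: "negligible N" and k: "\<And>x e. x \<notin> N \<Longrightarrow> 0 < e \<Longrightarrow> \<exists>d>0. \<forall>h. 0 < h \<and> h < d \<longrightarrow>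
        norm (integral (cbox x (x + h *\<^sub>R One)) hh /\<^sub>R h ^ DIM(real^'d) - hh x) < e"
      using integrable_ccontinuous_explicit[of hh] hh_int by blast
    have hx: "hh x = 0" if xN: "x \<notin> N" for x
    proof (rule ccontr)
      assume "hh x \<noteq> 0"
      then obtain d where "d > 0" and "\<forall>h. 0 < h \<and> h < d \<longrightarrow>
          norm (integral (cbox x (x + h *\<^sub>R One)) hh /\<^sub>R h ^ DIM(real^'d) - hh x) < norm (hh x)"
        using k[OF xN, of "norm (hh x)"] by auto
      then have "norm (integral (cbox x (x + (d/2) *\<^sub>R One)) hh /\<^sub>R (d/2) ^ DIM(real^'d) - hh x) < norm (hh x)"
        by auto
      then show False by (simp add: hh_zero)
    qed
    have "AE x in lebesgue. x \<in> box c d \<longrightarrow> g x = 0"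
      by (rule AE_I'[of N]) (use N in \<open>simp add: negligible_iff_null_sets\<close>, use hx in \<open>force simp: hh_def\<close>)
    moreover have "AE x in lebesgue. x \<notin> cbox c d - box c d"
      using negligible_frontier_interval[of c d] by (intro AE_not_in) (simp add: negligible_iff_null_sets)
    ultimately show ?thesis by eventually_elim auto
  qed
  obtain \<D> where D: "countable \<D>" "\<D> \<subseteq> Pow U" "\<And>X. X \<in> \<D> \<Longrightarrow> \<exists>a b. X = cbox a b" "\<Union>\<D> = U"
    using open_countable_Union_open_cbox[OF U] by metis
  have "\<forall>X\<in>\<D>. AE x in lebesgue. x \<in> X \<longrightarrow> g x = 0"
  proof
    fix X assume X: "X \<in> \<D>"
    then obtain a b where "X = cbox a b" using D(3) by blast
    then show "AE x in lebesgue. x \<in> X \<longrightarrow> g x = 0" using cb[of a b] D(2) X by auto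
  qed
  then have "AE x in lebesgue. \<forall>X\<in>\<D>. x \<in> X \<longrightarrow> g x = 0"
    by (subst AE_ball_countable[OF D(1)])
  then have "AE x in lebesgue. x \<in> U \<longrightarrow> g x = 0"
    by eventually_elim (use D(4) in auto)
  then show ?thesis by (simp add: AE_completion_iff)
qed


lemma W:
  fixes f g :: "real^'d::finite \<Rightarrow> real" and l :: "'d list"
  assumes wd: "weak_deriv l f g" and K0: "compact K0" and supp: "\<And>x. x \<notin> K0 \<Longrightarrow> f x = 0"
  shows "integrable lborel g"
proof -
  have gl: "loc_integrable g" using wd by (simp add: weak_deriv_def)
  have g_meas[measurable]: "g \<in> borel_measurable lborel" using gl by (simp add: loc_integrable_def)
  have U: "open (- K0)" using K0 by (simp add: compact_imp_closed open_Compl)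
  have ae: "AE x in lborel. x \<in> - K0 \<longrightarrow> g x = 0"
  proof (rule Z[OF U g_meas])
    show "set_integrable lborel K g" if "compact K" "K \<subseteq> - K0" for K
      using gl that by (simp add: loc_integrable_def)
  next
    fix n a b assume ab: "cbox a b \<subseteq> - K0"
    have eq: "(\<lambda>x. f x * dpart l (bump n a b) x) = (\<lambda>x. 0)"
    proof (rule ext)
      fix x show "f x * dpart l (bump n a b) x = 0"
      proof (cases "x \<in> cbox a b")
        case True then have "x \<notin> K0" using ab by blast
        then show ?thesis by (simp add: supp)
      next
        case False then show ?thesis by (simp add: bump_dpart_zero)
      qed
    qed
    have wd2: "(\<integral>x. f x * dpart l (bump n a b) x \<partial>lborel) = (-1)^length l * (\<integral>x. g x * bump n a b x \<partial>lborel)"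
      using wd bump_test[of n a b] unfolding weak_deriv_def by blast
    have "(\<integral>x. f x * dpart l (bump n a b) x \<partial>lborel) = 0" unfolding eq by simp
    then have "(-1) ^ length l * (\<integral>x. g x * bump n a b x \<partial>lborel) = 0"
      using wd2 by simp
    then show "(\<integral>x. g x * bump n a b x \<partial>lborel) = 0" by simp
  qed
  have "set_integrable lborel K0 g" using gl K0 by (simp add: loc_integrable_def)
  then have int: "integrable lborel (\<lambda>x. indicator K0 x *\<^sub>R g x)" by (simp add: set_integrable_def)
  show ?thesis
    by (rule integrable_cong_AE_imp[OF int g_meas]) (use ae in \<open>eventually_elim, auto simp: indicator_def\<close>)
qed


theorem theorem3p12:
  fixes T s :: real
    and b :: "real \<Rightarrow> real^'d::finite \<Rightarrow> real^'d"
    and \<sigma> :: "real \<Rightarrow> real^'d \<Rightarrow> real^'n::finite^'d"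
    and \<alpha> lam C :: real and \<eta> :: "real \<Rightarrow> real^'d \<Rightarrow> real"
    and M :: "'w measure" and F :: "real \<Rightarrow> 'w measure" and X :: "real \<Rightarrow> 'w \<Rightarrow> real^'d"
    and bbar :: "real \<Rightarrow> real \<Rightarrow> real^'d \<Rightarrow> real^'d"
    and abar :: "real \<Rightarrow> real \<Rightarrow> real^'d \<Rightarrow> real^'d^'d"
    and q :: "real \<Rightarrow> real^'d \<Rightarrow> real^'d" and r :: "real \<Rightarrow> real^'d \<Rightarrow> real^'d^'d"
    and p :: "real^'d \<Rightarrow> real"
    and w1 :: "'d \<Rightarrow> real^'d \<Rightarrow> real" and w2 :: "'d \<Rightarrow> 'd \<Rightarrow> real^'d \<Rightarrow> real"
    and v vt :: "real^'d \<Rightarrow> real"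
  defines "a \<equiv> (\<lambda>t x. \<sigma> t x ** transpose (\<sigma> t x))"
  assumes T_pos: "0 < T"
    and regular: "regular_conditions T b a \<alpha> lam C \<eta>"
    and sde: "solves_martingale_problem M F X b a T"
    and bbar_diff: "\<forall>t\<in>{0..T}. \<forall>x. \<forall>h\<in>{-1..1}. (\<lambda>h. bbar t h x) differentiable (at h within {-1..1})"
    and abar_diff: "\<forall>t\<in>{0..T}. \<forall>x. \<forall>h\<in>{-1..1}. (\<lambda>h. abar t h x) differentiable (at h within {-1..1})"
    and bbar0: "\<forall>t\<in>{0..T}. \<forall>x. bbar t 0 x = b t x"
    and abar0: "\<forall>t\<in>{0..T}. \<forall>x. abar t 0 x = a t x"
    and q_def: "\<forall>t\<in>{0..T}. \<forall>x. ((\<lambda>h. bbar t h x) has_vector_derivative q t x) (at 0 within {-1..1})"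
    and r_def: "\<forall>t\<in>{0..T}. \<forall>x. ((\<lambda>h. abar t h x) has_vector_derivative r t x) (at 0 within {-1..1})"
    and s_range: "0 \<le> s" "s < T"
    and p_meas: "p \<in> borel_measurable lborel"
    and p_density: "distr M lborel (X s) = density lborel (\<lambda>x. ennreal (p x))"
    and p_pos: "\<forall>x. p x > 0"
    and p_H2: "H2_loc p"
    and q_Cc1: "C_c 1 (q s)"
    and r_Cc2: "C_c 2 (r s)"
    and w1_weak: "\<forall>i. weak_deriv [i] (\<lambda>x. q s x $ i * p x) (w1 i)"
    and w2_weak: "\<forall>i j. weak_deriv [i, j] (\<lambda>x. r s x $ i $ j * p x) (w2 i j)"
    and v_def: "v = (\<lambda>x. ((- (\<Sum>i\<in>UNIV. w1 i x)) + 1/2 * (\<Sum>i\<in>UNIV. \<Sum>j\<in>UNIV. w2 i j x)) / p x)"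
    and vt_meas: "vt \<in> borel_measurable lborel"
    and vt_L1: "integrable (density lborel (\<lambda>x. ennreal (p x))) vt"
    and same_exp: "\<forall>f t. test_fun f \<longrightarrow> s < t \<longrightarrow> t \<le> T \<longrightarrow>
        (\<integral>\<omega>. f (X t \<omega>) * v (X s \<omega>) \<partial>M) = (\<integral>\<omega>. f (X t \<omega>) * vt (X s \<omega>) \<partial>M)"
  shows "AE x in lborel. v x = vt x"
proof -
  have sde': "prob_space M" "\<forall>t\<in>{0..T}. subalgebra M (F t)" "\<forall>t\<in>{0..T}. X t \<in> borel_measurable (F t)"
    "\<forall>\<omega>\<in>space M. continuous_on {0..T} (\<lambda>t. X t \<omega>)"
    using sde unfolding solves_martingale_problem_def by auto
  interpret prob_space M by (rule sde'(1))
  have Xmeas: "X t \<in> borel_measurable M" if "t \<in> {0..T}" for t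
    using sde'(2,3) that measurable_from_subalg by blast
  have s_in: "s \<in> {0..T}" using s_range by auto
  have Xs[measurable]: "X s \<in> borel_measurable M" by (rule Xmeas[OF s_in])
  have Xs_lb: "X s \<in> measurable M lborel" using Xs by simp
  have p_meas'[measurable]: "p \<in> borel_measurable borel" using p_meas by simp
  have w1_int: "integrable lborel (w1 i)" for i
  proof (rule W[OF spec[OF w1_weak, of i]])
    show "compact (closure {x. q s x \<noteq> 0})"
      using q_Cc1 by (simp add: C_c_def compact_support_def compact_closure)
    show "q s x $ i * p x = 0" if "x \<notin> closure {x. q s x \<noteq> 0}" for x
    proof -
      have "q s x = 0" using that closure_subset[of "{x. q s x \<noteq> 0}"] by blast
      then show ?thesis by simp
    qed
  qed
  have w2_int: "integrable lborel (w2 i j)" for i j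
  proof (rule W[OF spec[OF spec[OF w2_weak, of i], of j]])
    show "compact (closure {x. r s x \<noteq> 0})"
      using r_Cc2 by (simp add: C_c_def compact_support_def compact_closure)
    show "r s x $ i $ j * p x = 0" if "x \<notin> closure {x. r s x \<noteq> 0}" for x
    proof -
      have "r s x = 0" using that closure_subset[of "{x. r s x \<noteq> 0}"] by blast
      then show ?thesis by simp
    qed
  qed
  have w1_meas[measurable]: "w1 i \<in> borel_measurable borel" for i
    using w1_int[of i] by (simp add: borel_measurable_integrable)
  have w2_meas[measurable]: "w2 i j \<in> borel_measurable borel" for i j
    using w2_int[of i j] by (simp add: borel_measurable_integrable)
  have v_meas[measurable]: "v \<in> borel_measurable borel"
    unfolding v_def by measurable
  have vt_meas'[measurable]: "vt \<in> borel_measurable borel" using vt_meas by simp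
  have pv: "(\<lambda>x. p x * v x) = (\<lambda>x. - (\<Sum>i\<in>UNIV. w1 i x) + 1/2 * (\<Sum>i\<in>UNIV. \<Sum>j\<in>UNIV. w2 i j x))"
  proof (rule ext)
    fix x
    have "p x \<noteq> 0" using p_pos[rule_format, of x] by simp
    then show "p x * v x = - (\<Sum>i\<in>UNIV. w1 i x) + 1/2 * (\<Sum>i\<in>UNIV. \<Sum>j\<in>UNIV. w2 i j x)"
      unfolding v_def by simp
  qed
  have pv_int: "integrable lborel (\<lambda>x. p x * v x)"
    unfolding pv by (intro Bochner_Integration.integrable_add Bochner_Integration.integrable_minus Bochner_Integration.integrable_mult_right Bochner_Integration.integrable_sum w1_int w2_int)
  have pvt_int: "integrable lborel (\<lambda>x. p x * vt x)"
    using vt_L1 integrable_density[of vt lborel p] p_pos by (simp add: less_imp_le)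
  have v_mu: "integrable (density lborel (\<lambda>x. ennreal (p x))) v"
    using pv_int integrable_density[of v lborel p] p_pos by (simp add: less_imp_le)
  have intM: "integrable M (\<lambda>\<omega>. h (X s \<omega>))"
    if "integrable (density lborel (\<lambda>x. ennreal (p x))) h" "h \<in> borel_measurable borel" for h :: "real^'d \<Rightarrow> real"
    using that integrable_distr_eq[OF Xs_lb, of h] p_density by simp
  have transfer: "(\<integral>\<omega>. \<phi> (X s \<omega>) * h (X s \<omega>) \<partial>M) = (\<integral>x. p x * (\<phi> x * h x) \<partial>lborel)"
    if [measurable]: "\<phi> \<in> borel_measurable borel" "h \<in> borel_measurable borel" for \<phi> h :: "real^'d \<Rightarrow> real"
  proof -
    have "(\<integral>\<omega>. \<phi> (X s \<omega>) * h (X s \<omega>) \<partial>M) = (\<integral>x. \<phi> x * h x \<partial>distr M lborel (X s))"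
      by (rule integral_distr[symmetric]) (use Xs_lb in auto)
    also have "\<dots> = (\<integral>x. \<phi> x * h x \<partial>density lborel (\<lambda>x. ennreal (p x)))" by (simp add: p_density)
    also have "\<dots> = (\<integral>x. p x *\<^sub>R (\<phi> x * h x) \<partial>lborel)"
      by (rule integral_density) (use p_pos in \<open>auto simp: less_imp_le\<close>)
    finally show ?thesis by simp
  qed
  \<comment> \<open>Step 2: passing to the limit t \<rightarrow> s\<close>
  define tk where "tk k = s + (T - s) / real (Suc k)" for k
  have tk: "s < tk k" "tk k \<le> T" for k
  proof -
    have "(T - s) / real (Suc k) \<le> (T - s) / 1"
      using s_range by (intro divide_left_mono) auto
    then show "s < tk k" "tk k \<le> T" using s_range by (auto simp: tk_def)
  qed
  have tk_in: "tk k \<in> {0..T}" for k using tk[of k] s_range by auto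
  have tk_lim: "tk \<longlonglongrightarrow> s"
  proof -
    have "(\<lambda>k. s + (T - s) * inverse (real (Suc k))) \<longlonglongrightarrow> s + (T - s) * 0"
      by (intro tendsto_intros LIMSEQ_inverse_real_of_nat)
    moreover have "tk = (\<lambda>k. s + (T - s) * inverse (real (Suc k)))"
      by (simp only: fun_eq_iff tk_def divide_inverse) simp
    ultimately show ?thesis by simp
  qed
  have lim: "(\<lambda>k. \<integral>\<omega>. \<phi> (X (tk k) \<omega>) * h (X s \<omega>) \<partial>M) \<longlonglongrightarrow> (\<integral>\<omega>. \<phi> (X s \<omega>) * h (X s \<omega>) \<partial>M)"
    if phi_cont: "continuous_on UNIV \<phi>" and phi_b: "\<And>x. \<bar>\<phi> x\<bar> \<le> 1"
      and hint: "integrable M (\<lambda>\<omega>. h (X s \<omega>))" and [measurable]: "h \<in> borel_measurable borel" for \<phi> h :: "real^'d \<Rightarrow> real"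
  proof (rule integral_dominated_convergence[where w="\<lambda>\<omega>. norm (h (X s \<omega>))"])
    have [measurable]: "\<phi> \<in> borel_measurable borel" using phi_cont by (rule borel_measurable_continuous_onI)
    show "(\<lambda>\<omega>. \<phi> (X s \<omega>) * h (X s \<omega>)) \<in> borel_measurable M" by measurable
    show "(\<lambda>\<omega>. \<phi> (X (tk k) \<omega>) * h (X s \<omega>)) \<in> borel_measurable M" for k
    proof -
      have [measurable]: "X (tk k) \<in> borel_measurable M" by (rule Xmeas[OF tk_in])
      show ?thesis by measurable
    qed
    show "integrable M (\<lambda>\<omega>. norm (h (X s \<omega>)))" using hint by (rule integrable_norm)
    show "AE \<omega> in M. (\<lambda>k. \<phi> (X (tk k) \<omega>) * h (X s \<omega>)) \<longlonglongrightarrow> \<phi> (X s \<omega>) * h (X s \<omega>)"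
    proof (rule AE_I2)
      fix \<omega> assume \<omega>: "\<omega> \<in> space M"
      have "(\<lambda>k. X (tk k) \<omega>) \<longlonglongrightarrow> X s \<omega>"
        by (rule continuous_on_tendsto_compose[OF sde'(4)[rule_format, OF \<omega>] tk_lim s_in]) (use tk_in in auto)
      then have "(\<lambda>k. \<phi> (X (tk k) \<omega>)) \<longlonglongrightarrow> \<phi> (X s \<omega>)"
        by (rule continuous_on_tendsto_compose[OF phi_cont]) auto
      then show "(\<lambda>k. \<phi> (X (tk k) \<omega>) * h (X s \<omega>)) \<longlonglongrightarrow> \<phi> (X s \<omega>) * h (X s \<omega>)"
        by (intro tendsto_intros)
    qed
    show "AE \<omega> in M. norm (\<phi> (X (tk k) \<omega>) * h (X s \<omega>)) \<le> norm (h (X s \<omega>))" for k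
      using phi_b by (intro AE_I2) (simp add: abs_mult mult_left_le_one_le)
  qed
  have key: "(\<integral>x. (p x * (v x - vt x)) * bump n a b x \<partial>lborel) = 0" for n a b
  proof -
    let ?\<phi> = "bump n a b"
    have phi_cont: "continuous_on UNIV ?\<phi>" by (rule bump_cont)
    have phi_b: "\<bar>?\<phi> x\<bar> \<le> 1" for x using bump_bounds[of n a b x] by simp
    have [measurable]: "?\<phi> \<in> borel_measurable borel" using phi_cont by (rule borel_measurable_continuous_onI)
    have eqk: "(\<integral>\<omega>. ?\<phi> (X (tk k) \<omega>) * v (X s \<omega>) \<partial>M) = (\<integral>\<omega>. ?\<phi> (X (tk k) \<omega>) * vt (X s \<omega>) \<partial>M)" for k
      using same_exp bump_test[of n a b] tk[of k] by blast
    have l1: "(\<lambda>k. \<integral>\<omega>. ?\<phi> (X (tk k) \<omega>) * v (X s \<omega>) \<partial>M) \<longlonglongrightarrow> (\<integral>\<omega>. ?\<phi> (X s \<omega>) * v (X s \<omega>) \<partial>M)"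
      by (rule lim[OF phi_cont phi_b intM[OF v_mu v_meas] v_meas])
    have l2: "(\<lambda>k. \<integral>\<omega>. ?\<phi> (X (tk k) \<omega>) * v (X s \<omega>) \<partial>M) \<longlonglongrightarrow> (\<integral>\<omega>. ?\<phi> (X s \<omega>) * vt (X s \<omega>) \<partial>M)"
      unfolding eqk by (rule lim[OF phi_cont phi_b intM[OF vt_L1 vt_meas'] vt_meas'])
    have "(\<integral>\<omega>. ?\<phi> (X s \<omega>) * v (X s \<omega>) \<partial>M) = (\<integral>\<omega>. ?\<phi> (X s \<omega>) * vt (X s \<omega>) \<partial>M)"
      using LIMSEQ_unique[OF l1 l2] .
    then have e: "(\<integral>x. p x * (?\<phi> x * v x) \<partial>lborel) = (\<integral>x. p x * (?\<phi> x * vt x) \<partial>lborel)"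
      by (simp only: transfer[of ?\<phi> v] transfer[of ?\<phi> vt] \<open>?\<phi> \<in> borel_measurable borel\<close> v_meas vt_meas')
    have aux: "\<bar>a\<bar> * (\<bar>c\<bar> * \<bar>b\<bar>) \<le> \<bar>a\<bar> * \<bar>b\<bar>" if "\<bar>c\<bar> \<le> 1" for a b c :: real
      by (rule mult_left_mono) (use that in \<open>auto intro: mult_left_le_one_le\<close>)
    have i1: "integrable lborel (\<lambda>x. p x * (?\<phi> x * v x))"
      by (rule Bochner_Integration.integrable_bound[OF pv_int]) (use phi_b aux in \<open>auto simp: abs_mult intro!: AE_I2\<close>)
    have i2: "integrable lborel (\<lambda>x. p x * (?\<phi> x * vt x))"
      by (rule Bochner_Integration.integrable_bound[OF pvt_int]) (use phi_b aux in \<open>auto simp: abs_mult intro!: AE_I2\<close>)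
    have "(\<lambda>x. (p x * (v x - vt x)) * ?\<phi> x) = (\<lambda>x. p x * (?\<phi> x * v x) - p x * (?\<phi> x * vt x))"
      by (auto simp: fun_eq_iff algebra_simps)
    then have "(\<integral>x. (p x * (v x - vt x)) * ?\<phi> x \<partial>lborel) = (\<integral>x. p x * (?\<phi> x * v x) \<partial>lborel) - (\<integral>x. p x * (?\<phi> x * vt x) \<partial>lborel)"
      using Bochner_Integration.integral_diff[OF i1 i2] by simp
    then show ?thesis using e by simp
  qed
  have "AE x in lborel. x \<in> UNIV \<longrightarrow> p x * (v x - vt x) = 0"
  proof (rule Z)
    show "(\<lambda>x. p x * (v x - vt x)) \<in> borel_measurable lborel" by measurable
    have gi: "integrable lborel (\<lambda>x. p x * (v x - vt x))"
      using Bochner_Integration.integrable_diff[OF pv_int pvt_int] by (simp add: algebra_simps)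
    show "set_integrable lborel K (\<lambda>x. p x * (v x - vt x))" if "compact K" "K \<subseteq> UNIV" for K
      unfolding set_integrable_def using that by (intro integrable_mult_indicator gi) (auto intro: borel_compact)
  qed (auto simp: key)
  then show ?thesis
  proof eventually_elim
    case (elim x)
    then show ?case using p_pos[rule_format, of x] by simp
  qed
qed


end
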